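(* Let $\gamma:[0,1]\to\mathbb{C}$ be a Jordan arc (continuous and injective) and $t_0\in(0,1)$. Assume that for every open interval $I\subset(0,1)$ with $t_0\in I$ and every function $f:I\to\mathbb{C}$ the following two conditions are equivalent: (1) there are a power series $\sum_{n\ge0}a_n(t-t_0)^n$ with radius of convergence $r>0$ and $0<\delta\le r$ such that $f(t)=\sum_{n\ge0}a_n(t-t_0)^n$ for $t\in(t_0-\delta,t_0+\delta)$; (2) there are a power series $\sum_{n\ge0}b_n(z-\gamma(t_0))^n$ with radius of convergence $s>0$ and $0<\epsilon\le s$ such that $f(t)=\sum_{n\ge0}b_n(\gamma(t)-\gamma(t_0))^n$ for $t\in(t_0-\epsilon,t_0+\epsilon)$. Then $\gamma$ is locally analytic at $t_0$: there exist $\delta>0$ with $(t_0-\delta,t_0+\delta)\subset[0,1]$, an open set $V\subset\mathbb{C}$ containing $(t_0-\delta,t_0+\delta)$, and an injective holomorphic (conformal) map $\phi:V\to\mathbb{C}$ with $\phi=\gamma$ on $(t_0-\delta,t_0+\delta)$. *)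

theory Defs
  imports "HOL-Analysis.Analysis"
begin

end

theory Submission
  imports Defs "HOL-Complex_Analysis.Complex_Analysis"
begin

definition lin2 :: "complex \<Rightarrow> complex \<Rightarrow> nat \<Rightarrow> complex" where
  "lin2 a b n = (if n = 0 then a else if n = 1 then b else 0)"

lemma lin2_sum: "(\<Sum>n. lin2 a b n * z ^ n) = a + b * z"
proof -
  have "(\<Sum>n. lin2 a b n * z ^ n) = (\<Sum>n\<in>{0,1}. lin2 a b n * z ^ n)"
    by (rule suminf_finite) (auto simp: lin2_def)
  then show ?thesis by (simp add: lin2_def)
qed

lemma lin2_summable: "summable (\<lambda>n. lin2 a b n * z ^ n)"
  by (rule summable_finite[of "{0,1}"]) (auto simp: lin2_def)

lemma lin2_conv: "conv_radius (lin2 a b) = \<infinity>"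
  by (rule conv_radius_inftyI'') (rule lin2_summable)

theorem lemma5p5:
  fixes \<gamma> :: "real \<Rightarrow> complex" and t0 :: real
  assumes jordan: "arc \<gamma>"
    and t0: "t0 \<in> {0<..<1}"
    and equiv: "\<And>(I :: real set) (f :: real \<Rightarrow> complex).
       (\<exists>a b. I = {a<..<b}) \<Longrightarrow> I \<subseteq> {0<..<1} \<Longrightarrow> t0 \<in> I \<Longrightarrow>
       ((\<exists>(c :: nat \<Rightarrow> complex) \<delta>. conv_radius c > 0 \<and> 0 < \<delta> \<and> ereal \<delta> \<le> conv_radius c \<and>
            (\<forall>t\<in>I. \<bar>t - t0\<bar> < \<delta> \<longrightarrow> f t = (\<Sum>n. c n * (complex_of_real (t - t0)) ^ n)))
        \<longleftrightarrow>
        (\<exists>(d :: nat \<Rightarrow> complex) \<epsilon>. conv_radius d > 0 \<and> 0 < \<epsilon> \<and> ereal \<epsilon> \<le> conv_radius d \<and>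
            (\<forall>t\<in>I. \<bar>t - t0\<bar> < \<epsilon> \<longrightarrow> f t = (\<Sum>n. d n * (\<gamma> t - \<gamma> t0) ^ n))))"
  shows "\<exists>\<delta>>0. {t0 - \<delta><..<t0 + \<delta>} \<subseteq> {0..1} \<and>
           (\<exists>V (\<phi> :: complex \<Rightarrow> complex). open V \<and>
              complex_of_real ` {t0 - \<delta><..<t0 + \<delta>} \<subseteq> V \<and>
              \<phi> holomorphic_on V \<and> inj_on \<phi> V \<and>
              (\<forall>t\<in>{t0 - \<delta><..<t0 + \<delta>}. \<phi> (complex_of_real t) = \<gamma> t))"
proof -
  let ?I = "{0<..<1::real}"
  have I: "\<exists>a b. ?I = {a<..<b}" "?I \<subseteq> {0<..<1}" "t0 \<in> ?I" using t0 by auto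
  have "\<exists>(d :: nat \<Rightarrow> complex) \<epsilon>. conv_radius d > 0 \<and> 0 < \<epsilon> \<and> ereal \<epsilon> \<le> conv_radius d \<and>
            (\<forall>t\<in>?I. \<bar>t - t0\<bar> < \<epsilon> \<longrightarrow> \<gamma> t = (\<Sum>n. d n * (\<gamma> t - \<gamma> t0) ^ n))"
    by (rule exI[of _ "lin2 (\<gamma> t0) 1"], rule exI[of _ 1]) (simp add: lin2_conv lin2_sum)
  with equiv[OF I, of \<gamma>] obtain c \<delta> where c: "conv_radius c > 0" "0 < \<delta>" "ereal \<delta> \<le> conv_radius c"
     and cg: "\<forall>t\<in>?I. \<bar>t - t0\<bar> < \<delta> \<longrightarrow> \<gamma> t = (\<Sum>n. c n * (complex_of_real (t - t0)) ^ n)"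
    by blast
  have "\<exists>(c :: nat \<Rightarrow> complex) \<delta>. conv_radius c > 0 \<and> 0 < \<delta> \<and> ereal \<delta> \<le> conv_radius c \<and>
            (\<forall>t\<in>?I. \<bar>t - t0\<bar> < \<delta> \<longrightarrow> complex_of_real (t - t0) = (\<Sum>n. c n * (complex_of_real (t - t0)) ^ n))"
    by (rule exI[of _ "lin2 0 1"], rule exI[of _ 1]) (simp add: lin2_conv lin2_sum)
  with equiv[OF I, of "\<lambda>t. complex_of_real (t - t0)"] obtain d \<epsilon> where d: "conv_radius d > 0" "0 < \<epsilon>" "ereal \<epsilon> \<le> conv_radius d"
     and dg: "\<forall>t\<in>?I. \<bar>t - t0\<bar> < \<epsilon> \<longrightarrow> complex_of_real (t - t0) = (\<Sum>n. d n * (\<gamma> t - \<gamma> t0) ^ n)"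
    by blast
  define \<phi> where "\<phi> z = eval_fps (Abs_fps c) (z - of_real t0)" for z
  define g where "g w = eval_fps (Abs_fps d) w" for w
  have \<phi>hol: "\<phi> holomorphic_on ball (of_real t0) \<delta>"
  proof -
    have "eval_fps (Abs_fps c) holomorphic_on ball 0 \<delta>"
      by (rule holomorphic_on_eval_fps) (use c in \<open>auto simp: fps_conv_radius_def intro!: ball_eball_mono\<close>)
    moreover have "(\<lambda>z. z - of_real t0) holomorphic_on ball (complex_of_real t0) \<delta>"
      by (rule holomorphic_on_diff[OF holomorphic_on_ident holomorphic_on_const])
    moreover have "(\<lambda>z. z - of_real t0) ` ball (complex_of_real t0) \<delta> \<subseteq> ball 0 \<delta>"
      by (auto simp: dist_complex_def norm_minus_commute)
    ultimately have "(eval_fps (Abs_fps c) \<circ> (\<lambda>z. z - of_real t0)) holomorphic_on ball (of_real t0) \<delta>"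
      by (intro holomorphic_on_compose_gen)
    then show ?thesis unfolding \<phi>_def o_def .
  qed
  have ghol: "g holomorphic_on ball 0 \<epsilon>"
    unfolding g_def
    by (rule holomorphic_on_eval_fps) (use d in \<open>auto simp: fps_conv_radius_def intro!: ball_eball_mono\<close>)
  have \<phi>t0: "\<phi> (of_real t0) = \<gamma> t0"
    using cg t0 c by (simp add: \<phi>_def eval_fps_at_0)
  have "continuous (at (of_real t0)) \<phi>"
  proof -
    have "continuous_on (ball (complex_of_real t0) \<delta>) \<phi>"
      by (rule holomorphic_on_imp_continuous_on[OF \<phi>hol])
    then show ?thesis using c(2) continuous_on_eq_continuous_at[OF open_ball, of "complex_of_real t0" \<delta> \<phi>] by simp
  qed
  then obtain \<rho>1 where \<rho>1: "\<rho>1 > 0" "\<And>z. dist z (of_real t0) < \<rho>1 \<Longrightarrow> dist (\<phi> z) (\<gamma> t0) < \<epsilon>"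
    using d(2) \<phi>t0 unfolding continuous_at_eps_delta by metis
  define \<rho> where "\<rho> = min (min \<rho>1 \<delta>) (min \<epsilon> (min t0 (1 - t0)))"
  have \<rho>: "\<rho> > 0" "\<rho> \<le> \<rho>1" "\<rho> \<le> \<delta>" "\<rho> \<le> \<epsilon>" "\<rho> \<le> t0" "\<rho> \<le> 1 - t0"
    using \<rho>1 c d t0 by (auto simp: \<rho>_def)
  define S where "S = ball (complex_of_real t0) \<rho>"
  define h where "h z = g (\<phi> z - \<gamma> t0) - (z - of_real t0)" for z
  have hhol: "h holomorphic_on S"
  proof -
    have "(g \<circ> (\<lambda>z. \<phi> z - \<gamma> t0)) holomorphic_on S"
    proof (rule holomorphic_on_compose_gen[OF _ ghol])
      show "(\<lambda>z. \<phi> z - \<gamma> t0) holomorphic_on S"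
        by (rule holomorphic_on_diff[OF holomorphic_on_subset[OF \<phi>hol] holomorphic_on_const]) (use \<rho> in \<open>auto simp: S_def\<close>)
      show "(\<lambda>z. \<phi> z - \<gamma> t0) ` S \<subseteq> ball 0 \<epsilon>"
        using \<rho>1 \<rho> by (force simp: S_def dist_norm norm_minus_commute)
    qed
    then show ?thesis unfolding h_def o_def by (rule holomorphic_on_diff[OF _ holomorphic_on_diff[OF holomorphic_on_ident holomorphic_on_const]])
  qed
  define U where "U = complex_of_real ` {t0 - \<rho><..<t0 + \<rho>}"
  have US: "U \<subseteq> S"
    by (auto simp: U_def S_def dist_norm abs_less_iff simp flip: of_real_diff)
  have \<phi>real: "\<phi> (of_real t) = \<gamma> t" if "t \<in> {t0 - \<rho><..<t0 + \<rho>}" for t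
  proof -
    have "t \<in> ?I" "\<bar>t - t0\<bar> < \<delta>" using that \<rho> by auto
    then show ?thesis using cg by (simp add: \<phi>_def eval_fps_def flip: of_real_diff)
  qed
  have hU: "h z = 0" if zU: "z \<in> U" for z
  proof -
    obtain t where t: "t \<in> {t0 - \<rho><..<t0 + \<rho>}" "z = of_real t" using zU U_def by auto
    have "t \<in> ?I" "\<bar>t - t0\<bar> < \<epsilon>" using t \<rho> by auto
    then have "complex_of_real (t - t0) = g (\<gamma> t - \<gamma> t0)" using dg by (simp add: g_def eval_fps_def)
    then show ?thesis using t \<phi>real by (simp add: h_def)
  qed
  have lim: "complex_of_real t0 islimpt U"
  proof (rule islimpt_approachable[THEN iffD2], intro allI impI)
    fix e :: real assume e: "e > 0"
    define x where "x = t0 + min e \<rho> / 2"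
    have "x \<in> {t0 - \<rho><..<t0 + \<rho>}" using e \<rho> by (auto simp: x_def)
    moreover have "x \<noteq> t0" "dist x t0 < e" using e \<rho> by (auto simp: x_def dist_real_def)
    ultimately show "\<exists>x'\<in>U. x' \<noteq> complex_of_real t0 \<and> dist x' (complex_of_real t0) < e"
      by (intro bexI[of _ "complex_of_real x"]) (auto simp: U_def dist_of_real)
  qed
  have h0: "h w = 0" if "w \<in> S" for w
    by (rule analytic_continuation[OF hhol _ _ US _ lim hU that]) (use \<rho> in \<open>auto simp: S_def\<close>)
  have inj: "inj_on \<phi> S"
  proof (rule inj_onI)
    fix x y assume "x \<in> S" "y \<in> S" "\<phi> x = \<phi> y"
    then show "x = y" using h0[of x] h0[of y] by (simp add: h_def)
  qed
  show ?thesis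
  proof (intro exI[of _ \<rho>] conjI exI[of _ S] exI[of _ \<phi>])
    show "\<rho> > 0" by (rule \<rho>)
    show "{t0 - \<rho><..<t0 + \<rho>} \<subseteq> {0..1}" using \<rho> by auto
    show "open S" by (simp add: S_def)
    show "complex_of_real ` {t0 - \<rho><..<t0 + \<rho>} \<subseteq> S" using US by (simp add: U_def)
    show "\<phi> holomorphic_on S" using \<phi>hol \<rho> by (auto simp: S_def intro: holomorphic_on_subset)
    show "inj_on \<phi> S" by (rule inj)
    show "\<forall>t\<in>{t0 - \<rho><..<t0 + \<rho>}. \<phi> (complex_of_real t) = \<gamma> t" using \<phi>real by blast
  qed
qed

end
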